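(* Let $n\ge1$, $1\le m\le n+1$, let $a_1,\dots,a_m\in\mathbb{R}^n$ be affinely independent points, and let $p_1,\dots,p_m\in(0,\infty)$. Consider the $m$-objective problem on $X=\mathbb{R}^n$ with objectives $f_i(x)=\|x-a_i\|^{p_i}$ ($i=1,\dots,m$), where $\|\cdot\|$ is the Euclidean norm. Then this problem is simple. In particular, the MED problem, which is the case $m\le n$ and $a_i=e_i$ (the $i$-th standard basis vector of $\mathbb{R}^n$), is simple for all choices of $n$, $m$ and $p_i$.
   Context: A problem is a finite set $\mathbf{f}=\{f_1,\dots,f_m\}$ of functions $f_i:\mathbb{R}^n\to\mathbb{R}$ together with a feasible region $X\subseteq\mathbb{R}^n$, to be minimized simultaneously. A subproblem $\mathbf{g}\subseteq\mathbf{f}$ is a subset of these functions (including $\emptyset$ and $\mathbf{f}$), with the same $X$; its evaluation map is $x\mapsto(f_i(x))_{f_i\in\mathbf{g}}\in\mathbb{R}^{|\mathbf{g}|}$. The Pareto set $X^*(\mathbf{g})$ is the set of $x^*\in X$ for which there is no $x\in X$ with $f_i(x)\le f_i(x^* )$ for all $f_i\in\mathbf{g}$ and $f_j(x)<f_j(x^* )$ for some $f_j\in\mathbf{g}$; by convention $X^*(\emptyset)=\emptyset$. A problem $\mathbf{f}$ is simple if every subproblem $\mathbf{g}\subseteq\mathbf{f}$ with $k=|\mathbf{g}|$ objectives satisfies: (S1) $X^*(\mathbf{g})$ is homeomorphic to $\Delta^{k-1}=\{t\in[0,1]^k:\sum t_i=1\}$ (with $\Delta^{-1}=\emptyset$);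 (S2) the evaluation map of $\mathbf{g}$ restricted to $X^*(\mathbf{g})$ is a topological embedding into $\mathbb{R}^k$. All sets carry the subspace topology from Euclidean space. *)

theory Defs
  imports "HOL-Analysis.Analysis"
begin

text \<open>A multi-objective problem is given by an indexed family of objectives
  f i, i \<in> I (I finite), and a feasible region X.  A subproblem is given by a
  subset G of the index set.\<close>

definition pareto_set :: "('i \<Rightarrow> 'a \<Rightarrow> real) \<Rightarrow> 'a set \<Rightarrow> 'i set \<Rightarrow> 'a set" where
  "pareto_set f X G =
     (if G = {} then {}
      else {x \<in> X. \<not> (\<exists>y\<in>X. (\<forall>i\<in>G. f i y \<le> f i x) \<and> (\<exists>j\<in>G. f j y < f j x))})"

text \<open>Standard simplex Delta^(k-1) in R^k, points indexed by {..<k}; empty for k = 0.\<close>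
definition std_simplex :: "nat \<Rightarrow> (nat \<Rightarrow> real) set" where
  "std_simplex k = {t \<in> PiE {..<k} (\<lambda>_. {0..1}). (\<Sum>i<k. t i) = 1}"

definition simple_problem ::
  "('i \<Rightarrow> 'a::topological_space \<Rightarrow> real) \<Rightarrow> 'i set \<Rightarrow> 'a set \<Rightarrow> bool" where
  "simple_problem f I X \<longleftrightarrow>
     (\<forall>G. G \<subseteq> I \<longrightarrow>
        (subtopology euclidean (pareto_set f X G)) homeomorphic_space
          (subtopology (powertop_real {..<card G}) (std_simplex (card G)))
      \<and> embedding_map (subtopology euclidean (pareto_set f X G)) (powertop_real G)
          (\<lambda>x. restrict (\<lambda>i. f i x) G))"

end

theory Submission
  imports Defs
begin

lemma L1:
  fixes A :: "'a::real_inner set"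
  assumes "finite A" "x \<in> convex hull A" "\<forall>a\<in>A. norm (y - a) \<le> norm (x - a)"
  shows "y = x"
proof -
  obtain u where u: "\<forall>a\<in>A. 0 \<le> u a" "sum u A = 1" "(\<Sum>a\<in>A. u a *\<^sub>R a) = x"
    using assms(1,2) convex_hull_finite by blast
  have ex: "norm (y - a)^2 = norm (y - x)^2 + 2 * inner (y - x) (x - a) + norm (x - a)^2" for a
  proof -
    show ?thesis by (simp add: power2_norm_eq_inner inner_diff_left inner_diff_right inner_commute algebra_simps)
  qed
  have le: "norm (y - x)^2 + 2 * inner (y - x) (x - a) \<le> 0" if "a \<in> A" for a
  proof -
    have "norm (y - a)^2 \<le> norm (x - a)^2"
      using assms(3) that by (simp add: power_mono)
    then show ?thesis using ex[of a] by linarith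
  qed
  have "(\<Sum>a\<in>A. u a * (norm (y - x)^2 + 2 * inner (y - x) (x - a))) \<le> 0"
    by (rule sum_nonpos) (simp add: le u(1) mult_nonneg_nonpos)
  moreover have "(\<Sum>a\<in>A. u a * (norm (y - x)^2 + 2 * inner (y - x) (x - a)))
     = norm (y - x)^2 * sum u A + 2 * inner (y - x) (\<Sum>a\<in>A. u a *\<^sub>R (x - a))"
  proof -
    have e: "u a * (norm (y - x)^2 + 2 * inner (y - x) (x - a)) = norm (y - x)^2 * u a + 2 * inner (y - x) (u a *\<^sub>R (x - a))" for a
      by (simp add: algebra_simps)
    show ?thesis unfolding e sum.distrib by (simp add: sum_distrib_left inner_sum_right)
  qed
  moreover have "(\<Sum>a\<in>A. u a *\<^sub>R (x - a)) = 0"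
    using u by (simp add: scaleR_diff_right sum_subtractf flip: scaleR_left.sum)
  ultimately have "norm (y - x)^2 \<le> 0" using u(2) by simp
  then show ?thesis by simp
qed

lemma L2:
  fixes A :: "'a::euclidean_space set"
  assumes "finite A" "x \<notin> convex hull A" "A \<noteq> {}"
  shows "\<exists>y. \<forall>a\<in>A. norm (y - a) < norm (x - a)"
proof -
  let ?S = "convex hull A"
  have cS: "convex ?S" "closed ?S" "?S \<noteq> {}"
    using assms by (auto simp: convex_convex_hull compact_imp_closed finite_imp_compact_convex_hull)
  obtain y where y0: "y \<in> ?S" "\<And>z. z \<in> ?S \<Longrightarrow> dist x y \<le> dist x z"
    using distance_attains_inf[OF cS(2,3), of x] by metis
  have y: "y \<in> ?S" "\<forall>z\<in>?S. dist x y \<le> dist x z" using y0 by auto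
  have "x \<noteq> y" using y(1) assms(2) by blast
  show ?thesis
  proof (intro exI ballI)
    fix a assume a: "a \<in> A"
    have aS: "a \<in> ?S" using a by (rule hull_inc)
    have i: "inner (x - y) (a - y) \<le> 0"
      using any_closest_point_dot[OF cS(1,2) y(1) aS y(2)] .
    have "norm (x - a)^2 = norm (x - y)^2 - 2 * inner (x - y) (a - y) + norm (y - a)^2"
      by (simp add: power2_norm_eq_inner inner_diff_left inner_diff_right inner_commute algebra_simps)
    moreover have "norm (x - y)^2 > 0" using \<open>x \<noteq> y\<close> by simp
    ultimately have "norm (y - a)^2 < norm (x - a)^2" using i by linarith
    then show "norm (y - a) < norm (x - a)" by (rule power_less_imp_less_base) simp
  qed
qed

lemma powr_le_iff':
  fixes p s t :: real
  assumes "0 < p" "0 \<le> s" "0 \<le> t" shows "s powr p \<le> t powr p \<longleftrightarrow> s \<le> t"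
proof
  assume "s powr p \<le> t powr p"
  then show "s \<le> t" using powr_less_mono2[of p t s] assms by linarith
next
  assume "s \<le> t"
  then show "s powr p \<le> t powr p" using powr_mono2[of p s t] assms by linarith
qed

lemma powr_less_iff':
  fixes p s t :: real
  assumes "0 < p" "0 \<le> s" "0 \<le> t" shows "s powr p < t powr p \<longleftrightarrow> s < t"
  using powr_le_iff'[of p t s] assms by linarith

lemma pareto_eq:
  fixes a :: "nat \<Rightarrow> 'a::euclidean_space"
  assumes "finite G" "\<forall>i\<in>G. p i > 0"
  shows "pareto_set (\<lambda>i x. norm (x - a i) powr p i) UNIV G = convex hull (a ` G)"
proof (cases "G = {}")
  case True then show ?thesis by (simp add: pareto_set_def)
next
  case False
  show ?thesis
  proof (intro equalityI subsetI)
    fix x assume x: "x \<in> pareto_set (\<lambda>i x. norm (x - a i) powr p i) UNIV G"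
    show "x \<in> convex hull (a ` G)"
    proof (rule ccontr)
      assume "x \<notin> convex hull (a ` G)"
      then obtain y where y: "\<forall>b\<in>a ` G. norm (y - b) < norm (x - b)"
        using L2[of "a ` G" x] assms False by auto
      have "\<forall>i\<in>G. norm (y - a i) powr p i < norm (x - a i) powr p i"
        using y assms(2) by (simp add: powr_less_iff')
      then show False using x False unfolding pareto_set_def
        by (auto dest: less_imp_le)
    qed
  next
    fix x assume x: "x \<in> convex hull (a ` G)"
    have "\<not> (\<exists>y\<in>UNIV. (\<forall>i\<in>G. norm (y - a i) powr p i \<le> norm (x - a i) powr p i)
           \<and> (\<exists>j\<in>G. norm (y - a j) powr p j < norm (x - a j) powr p j))"
    proof
      assume "\<exists>y\<in>UNIV. (\<forall>i\<in>G. norm (y - a i) powr p i \<le> norm (x - a i) powr p i)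
           \<and> (\<exists>j\<in>G. norm (y - a j) powr p j < norm (x - a j) powr p j)"
      then obtain y j where y: "\<forall>i\<in>G. norm (y - a i) powr p i \<le> norm (x - a i) powr p i"
        and j: "j \<in> G" "norm (y - a j) powr p j < norm (x - a j) powr p j" by blast
      have "\<forall>b\<in>a ` G. norm (y - b) \<le> norm (x - b)"
        using y assms(2) by (simp add: powr_le_iff')
      then have "y = x" using L1[of "a ` G" x y] assms x by auto
      then show False using j by simp
    qed
    then show "x \<in> pareto_set (\<lambda>i x. norm (x - a i) powr p i) UNIV G"
      using False by (simp add: pareto_set_def)
  qed
qed

lemma emb:
  fixes a :: "nat \<Rightarrow> 'a::euclidean_space"
  assumes "finite G" "\<forall>i\<in>G. p i > 0"
  shows "embedding_map (subtopology euclidean (convex hull (a ` G))) (powertop_real G)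
           (\<lambda>x. restrict (\<lambda>i. norm (x - a i) powr p i) G)"
proof (rule continuous_imp_embedding_map)
  show "continuous_map (subtopology euclidean (convex hull (a ` G))) (powertop_real G)
           (\<lambda>x. restrict (\<lambda>i. norm (x - a i) powr p i) G)"
  proof (subst continuous_map_componentwise, intro conjI ballI)
    show "(\<lambda>x. restrict (\<lambda>i. norm (x - a i) powr p i) G) ` topspace (subtopology euclidean (convex hull (a ` G))) \<subseteq> extensional G"
      by auto
    fix k assume k: "k \<in> G"
    have "continuous_on (convex hull (a ` G)) (\<lambda>x. norm (x - a k) powr p k)"
    proof (rule continuous_on_powr')
      show "continuous_on (convex hull (a ` G)) (\<lambda>x. norm (x - a k))"
        by (intro continuous_on_norm continuous_on_diff continuous_on_id continuous_on_const)
      show "continuous_on (convex hull (a ` G)) (\<lambda>x. p k)" by (rule continuous_on_const)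
      show "\<forall>x\<in>convex hull (a ` G). 0 \<le> norm (x - a k) \<and> (norm (x - a k) = 0 \<longrightarrow> 0 < p k)"
        using assms(2) k by simp
    qed
    then show "continuous_map (subtopology euclidean (convex hull (a ` G))) euclideanreal
           (\<lambda>x. restrict (\<lambda>i. norm (x - a i) powr p i) G k)"
      using k by simp
  qed
  show "compact_space (subtopology euclidean (convex hull (a ` G)))"
    by (intro compact_space_subtopology) (simp add: compactin_euclidean_iff finite_imp_compact_convex_hull assms(1))
  show "Hausdorff_space (powertop_real G)"
    by (simp add: Hausdorff_space_product_topology)
  show "inj_on (\<lambda>x. restrict (\<lambda>i. norm (x - a i) powr p i) G) (topspace (subtopology euclidean (convex hull (a ` G))))"
  proof (rule inj_onI)
    fix x y assume x: "x \<in> topspace (subtopology euclidean (convex hull (a ` G)))"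
      and y: "y \<in> topspace (subtopology euclidean (convex hull (a ` G)))"
      and e: "restrict (\<lambda>i. norm (x - a i) powr p i) G = restrict (\<lambda>i. norm (y - a i) powr p i) G"
    have "\<forall>i\<in>G. norm (y - a i) powr p i = norm (x - a i) powr p i"
    proof
      fix i assume "i \<in> G" then show "norm (y - a i) powr p i = norm (x - a i) powr p i"
        using fun_cong[OF e, of i] by simp
    qed
    have "\<forall>b\<in>a ` G. norm (y - b) \<le> norm (x - b)"
    proof
      fix b assume "b \<in> a ` G"
      then obtain i where i: "i \<in> G" "b = a i" by blast
      have "norm (y - a i) powr p i \<le> norm (x - a i) powr p i"
        using \<open>\<forall>i\<in>G. norm (y - a i) powr p i = norm (x - a i) powr p i\<close> i by simp
      then show "norm (y - b) \<le> norm (x - b)"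
        using powr_le_iff'[of "p i" "norm (y - a i)" "norm (x - a i)"] assms(2) i by simp
    qed
    have "y = x" by (rule L1[of "a ` G" x y]) (use assms x \<open>\<forall>b\<in>a ` G. norm (y - b) \<le> norm (x - b)\<close> in auto)
    then show "x = y" by simp
  qed
qed

lemma std_simplex_compact: "compactin (powertop_real {..<k}) (std_simplex k)"
proof (rule closed_compactin)
  let ?P = "PiE {..<k} (\<lambda>_. {0..1::real})"
  show "compactin (powertop_real {..<k}) ?P"
    by (simp add: compactin_PiE compactin_euclidean_iff)
  show "std_simplex k \<subseteq> ?P" by (auto simp: std_simplex_def)
  have eq: "std_simplex k = ?P \<inter> {t \<in> topspace (powertop_real {..<k}). (\<Sum>i<k. t i) \<in> {1}}"
  proof -
    have sub: "?P \<subseteq> topspace (powertop_real {..<k})"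
      unfolding topspace_product_topology by (rule PiE_mono) simp
    show ?thesis using sub unfolding std_simplex_def by blast
  qed
  have c1: "closedin (powertop_real {..<k}) ?P"
    by (simp add: closedin_product_topology)
  have c2: "closedin (powertop_real {..<k}) {t \<in> topspace (powertop_real {..<k}). (\<Sum>i<k. t i) \<in> {1}}"
    by (rule closedin_continuous_map_preimage) (auto intro!: continuous_map_sum continuous_map_product_projection)
  show "closedin (powertop_real {..<k}) (std_simplex k)"
    unfolding eq using c1 c2 by (rule closedin_Int)
qed

lemma std_simplex_sub: "std_simplex k \<subseteq> topspace (powertop_real {..<k})"
proof -
  have "PiE {..<k} (\<lambda>_. {0..1::real}) \<subseteq> topspace (powertop_real {..<k})"
    unfolding topspace_product_topology by (rule PiE_mono) simp
  then show ?thesis unfolding std_simplex_def by blast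
qed

lemma std_simplex_mem:
  assumes "t \<in> std_simplex k"
  shows "\<And>i. i < k \<Longrightarrow> 0 \<le> t i" "\<And>i. i < k \<Longrightarrow> t i \<le> 1" "(\<Sum>i<k. t i) = 1"
    "t \<in> PiE {..<k} (\<lambda>_. {0..1})"
proof -
  have P: "t \<in> PiE {..<k} (\<lambda>_. {0..1})" and "(\<Sum>i<k. t i) = 1"
    using assms unfolding std_simplex_def by blast+
  then show "(\<Sum>i<k. t i) = 1" "t \<in> PiE {..<k} (\<lambda>_. {0..1})" by blast+
  fix i assume "i < k"
  then have "t i \<in> {0..1}" using PiE_mem[OF P, of i] by simp
  then show "0 \<le> t i" "t i \<le> 1" by simp_all
qed

lemma homeo:
  fixes A :: "'a::euclidean_space set"
  assumes fin: "finite A" and ind: "\<not> affine_dependent A" and card: "card A = k"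
  shows "subtopology euclidean (convex hull A) homeomorphic_space
           subtopology (powertop_real {..<k}) (std_simplex k)"
proof -
  obtain b where b: "bij_betw b {..<k} A"
    using ex_bij_betw_nat_finite[OF fin] card by (auto simp: atLeast0LessThan)
  define c where "c = inv_into {..<k} b"
  have cb: "c (b i) = i" if "i < k" for i
    using b that unfolding c_def by (simp add: bij_betw_inv_into_left)
  have bc: "c a < k" "b (c a) = a" if "a \<in> A" for a
    using b that unfolding c_def
    by (auto simp: bij_betw_inv_into_right bij_betw_def inv_into_into)
  define \<phi> where "\<phi> t = (\<Sum>i<k. t i *\<^sub>R b i)" for t :: "nat \<Rightarrow> real"
  have reidx: "(\<Sum>i<k. g (b i)) = (\<Sum>a\<in>A. g a)" for g :: "'a \<Rightarrow> 'b::comm_monoid_add"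
    by (rule sum.reindex_bij_betw[OF b])
  have phiA: "\<phi> t = (\<Sum>a\<in>A. t (c a) *\<^sub>R a)" for t
    unfolding \<phi>_def using reidx[of "\<lambda>a. t (c a) *\<^sub>R a"] by (simp add: cb)
  let ?X = "subtopology (powertop_real {..<k}) (std_simplex k)"
  have topX: "topspace ?X = std_simplex k"
    using std_simplex_sub[of k] by (simp add: Int_absorb1)
  have img: "\<phi> ` std_simplex k = convex hull A"
  proof (intro equalityI subsetI)
    fix y assume "y \<in> \<phi> ` std_simplex k"
    then obtain t where t: "t \<in> std_simplex k" "y = \<phi> t" by blast
    have "(\<forall>a\<in>A. 0 \<le> t (c a)) \<and> sum (\<lambda>a. t (c a)) A = 1 \<and> (\<Sum>a\<in>A. t (c a) *\<^sub>R a) = y"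
    proof (intro conjI ballI)
      fix a assume "a \<in> A" then show "0 \<le> t (c a)" using std_simplex_mem(1)[OF t(1) bc(1)[of a]] by simp
    next
      show "sum (\<lambda>a. t (c a)) A = 1"
        using reidx[of "\<lambda>a. t (c a)"] std_simplex_mem(3)[OF t(1)] by (simp add: cb)
    next
      show "(\<Sum>a\<in>A. t (c a) *\<^sub>R a) = y" using t phiA by simp
    qed
    then show "y \<in> convex hull A" unfolding convex_hull_finite[OF fin] by (intro CollectI exI)
  next
    fix y assume "y \<in> convex hull A"
    then obtain u where u: "\<forall>a\<in>A. 0 \<le> u a" "sum u A = 1" "(\<Sum>a\<in>A. u a *\<^sub>R a) = y"
      unfolding convex_hull_finite[OF fin] by blast
    define t where "t = restrict (\<lambda>i. u (b i)) {..<k}"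
    have bA: "b i \<in> A" if "i < k" for i using b that by (auto simp: bij_betw_def)
    have "t \<in> std_simplex k"
      unfolding std_simplex_def
    proof (intro CollectI conjI)
      show "t \<in> PiE {..<k} (\<lambda>_. {0..1})"
      proof (rule PiE_I)
        fix i assume i: "i \<in> {..<k}"
        have "u (b i) \<le> sum u A" using member_le_sum[of "b i" A u] u(1) bA i fin by auto
        then show "t i \<in> {0..1}" using i u bA unfolding t_def by auto
      next
        fix i assume "i \<notin> {..<k}" then show "t i = undefined" by (simp add: t_def)
      qed
      show "(\<Sum>i<k. t i) = 1" using reidx[of u] u(2) by (simp add: t_def)
    qed
    moreover have "\<phi> t = y"
      unfolding \<phi>_def using reidx[of "\<lambda>a. u a *\<^sub>R a"] u(3) by (simp add: t_def)
    ultimately show "y \<in> \<phi> ` std_simplex k" by blast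
  qed
  have hm: "homeomorphic_map ?X (subtopology euclidean (convex hull A)) \<phi>"
  proof (rule continuous_imp_homeomorphic_map)
    have cphi: "continuous_map (powertop_real {..<k}) euclidean \<phi>"
      unfolding \<phi>_def
    proof (rule continuous_map_sum)
      fix i assume i: "i \<in> {..<k}"
      have "continuous_map (powertop_real {..<k}) euclidean ((\<lambda>r. r *\<^sub>R b i) \<circ> (\<lambda>t. t i))"
        by (rule continuous_map_compose[OF continuous_map_product_projection[OF i]])
          (simp add: continuous_on_scaleR continuous_on_id continuous_on_const)
      then show "continuous_map (powertop_real {..<k}) euclidean (\<lambda>t. t i *\<^sub>R b i)"
        by (simp add: o_def)
    qed simp
    show "continuous_map ?X (subtopology euclidean (convex hull A)) \<phi>"
    proof (rule continuous_map_into_subtopology[OF continuous_map_from_subtopology[OF cphi]])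
      show "\<phi> \<in> topspace ?X \<rightarrow> convex hull A" unfolding topX Pi_def using img by blast
    qed
    show "compact_space ?X"
      by (rule compact_space_subtopology[OF std_simplex_compact])
    show "Hausdorff_space (subtopology euclidean (convex hull A))"
      by (rule Hausdorff_space_subtopology) simp
    show "\<phi> ` topspace ?X = topspace (subtopology euclidean (convex hull A))"
      using img topX by simp
    show "inj_on \<phi> (topspace ?X)"
    proof (rule inj_onI)
      fix t s assume ts: "t \<in> topspace ?X" "s \<in> topspace ?X" and e: "\<phi> t = \<phi> s"
      then have t: "t \<in> std_simplex k" and s: "s \<in> std_simplex k" using topX by simp_all
      define U where "U a = t (c a) - s (c a)" for a
      have "sum U A = 0"
        using reidx[of "\<lambda>a. t (c a)"] reidx[of "\<lambda>a. s (c a)"] t s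
        by (simp add: U_def sum_subtractf cb std_simplex_mem(3))
      moreover have "(\<Sum>a\<in>A. U a *\<^sub>R a) = 0"
        using e phiA[of t] phiA[of s] by (simp add: U_def scaleR_diff_left sum_subtractf)
      ultimately have U0: "\<forall>v\<in>A. U v = 0"
      proof (intro ballI)
        fix v assume s0: "sum U A = 0" and s1: "(\<Sum>a\<in>A. U a *\<^sub>R a) = 0" and v: "v \<in> A"
        show "U v = 0"
        proof (rule ccontr)
          assume "U v \<noteq> 0"
          then have "affine_dependent A"
            unfolding affine_dependent_explicit_finite[OF fin]
            using s0 s1 v by (intro exI[of _ U]) blast
          then show False using ind by contradiction
        qed
      qed
      show "t = s"
      proof (rule PiE_ext)
        show "t \<in> PiE {..<k} (\<lambda>_. {0..1})" "s \<in> PiE {..<k} (\<lambda>_. {0..1})"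
          using std_simplex_mem(4)[OF t] std_simplex_mem(4)[OF s] by simp_all
      next
        fix i assume i: "i \<in> {..<k}"
        then have "b i \<in> A" using b by (auto simp: bij_betw_def)
        then have "U (b i) = 0" using U0 by blast
        then show "t i = s i" using i by (simp add: U_def cb)
      qed
    qed
  qed
  then have "?X homeomorphic_space subtopology euclidean (convex hull A)"
    by (rule homeomorphic_map_imp_homeomorphic_space)
  then show ?thesis by (subst homeomorphic_space_sym)
qed

theorem theorem5:
  fixes a :: "nat \<Rightarrow> real ^ 'n" and p :: "nat \<Rightarrow> real" and m :: nat
  assumes "1 \<le> m" and "m \<le> CARD('n) + 1"
    and "inj_on a {1..m}"
    and "\<not> affine_dependent (a ` {1..m})"
    and "\<forall>i\<in>{1..m}. p i > 0"
  shows "simple_problem (\<lambda>i x. norm (x - a i) powr p i) {1..m} UNIV"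
  unfolding simple_problem_def
proof (intro allI impI conjI)
  fix G assume G: "G \<subseteq> {1..m}"
  have fin: "finite G" using G finite_subset by blast
  have pos: "\<forall>i\<in>G. p i > 0" using G assms(5) by blast
  have eq: "pareto_set (\<lambda>i x. norm (x - a i) powr p i) UNIV G = convex hull (a ` G)"
    by (rule pareto_eq[OF fin pos])
  have ind: "\<not> affine_dependent (a ` G)"
    using affine_independent_subset[OF assms(4) image_mono[OF G]] .
  have card: "card (a ` G) = card G"
    using card_image[OF inj_on_subset[OF assms(3) G]] .
  show "subtopology euclidean (pareto_set (\<lambda>i x. norm (x - a i) powr p i) UNIV G) homeomorphic_space
          subtopology (powertop_real {..<card G}) (std_simplex (card G))"
    unfolding eq by (rule homeo[OF finite_imageI[OF fin] ind card])
  show "embedding_map (subtopology euclidean (pareto_set (\<lambda>i x. norm (x - a i) powr p i) UNIV G)) (powertop_real G)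
          (\<lambda>x. restrict (\<lambda>i. norm (x - a i) powr p i) G)"
    unfolding eq by (rule emb[OF fin pos])
qed

end
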